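(* Let $S=\{V^0,V^1,V^2\}$ be a partition of $V(T_A)$ into three classes and $\sigma$ an ordering of $V(T_A)$ such that $S$ and $\sigma$ are strongly consistent. Then none of the induced subgraphs $T_A[V^0]$, $T_A[V^1]$, $T_A[V^2]$ is connected. Moreover, for every simple path $C_0$ in $T_A$, the graph $T_A-V(C_0)$ has proper thinness equal to $3$.
   Context: For a graph $G=(V,E)$, a linear ordering $<$ of $V$ and a partition of $V$ into classes are called strongly consistent if for every triple $r<s<t$ of vertices with $rt\in E$: if $r$ and $s$ belong to the same class then $st\in E$, and if $s$ and $t$ belong to the same class then $rs\in E$. The proper thinness $\mathrm{pthin}(G)$ is the minimum $k$ such that some ordering of $V$ and some partition of $V$ into $k$ classes are strongly consistent. $T_0$ is the subdivided star $K_{1,5}$: a center adjacent to five vertices, each of which is adjacent to one further leaf (11 vertices). $T_A$ is the tree obtained from three disjoint copies of $T_0$ and a new vertex $v_0$ by making $v_0$ adjacent to one leaf of each copy. $G[X]$ denotes the induced subgraph on $X$ and $G-X$ the induced subgraph on $V(G)\setminus X$. *)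

theory Defs
  imports Main "HOL-Library.Disjoint_Sets"
begin

text \<open>Graphs: a vertex set V and a symmetric irreflexive adjacency predicate E.
  Everything is implicitly restricted to V (induced subgraphs).\<close>

definition same_class :: "'a set set \<Rightarrow> 'a \<Rightarrow> 'a \<Rightarrow> bool" where
  "same_class P x y \<longleftrightarrow> (\<exists>X\<in>P. x \<in> X \<and> y \<in> X)"

definition strongly_consistent ::
  "'a set \<Rightarrow> ('a \<Rightarrow> 'a \<Rightarrow> bool) \<Rightarrow> 'a rel \<Rightarrow> 'a set set \<Rightarrow> bool" where
  "strongly_consistent V E ord P \<longleftrightarrow>
     (\<forall>r\<in>V. \<forall>s\<in>V. \<forall>t\<in>V. (r, s) \<in> ord \<and> (s, t) \<in> ord \<and> E r t \<longrightarrow>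
        (same_class P r s \<longrightarrow> E s t) \<and> (same_class P s t \<longrightarrow> E r s))"

definition pthin :: "'a set \<Rightarrow> ('a \<Rightarrow> 'a \<Rightarrow> bool) \<Rightarrow> nat" where
  "pthin V E = (LEAST k. \<exists>ord P. strict_linear_order_on V ord \<and> partition_on V P \<and>
                   card P = k \<and> strongly_consistent V E ord P)"

definition connected_induced :: "('a \<Rightarrow> 'a \<Rightarrow> bool) \<Rightarrow> 'a set \<Rightarrow> bool" where
  "connected_induced E X \<longleftrightarrow> X \<noteq> {} \<and>
     (\<forall>x\<in>X. \<forall>y\<in>X. (\<lambda>a b. a \<in> X \<and> b \<in> X \<and> E a b)\<^sup>*\<^sup>* x y)"

definition simple_path :: "'a set \<Rightarrow> ('a \<Rightarrow> 'a \<Rightarrow> bool) \<Rightarrow> 'a list \<Rightarrow> bool" where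
  "simple_path V E p \<longleftrightarrow> p \<noteq> [] \<and> distinct p \<and> set p \<subseteq> V \<and>
     (\<forall>i. Suc i < length p \<longrightarrow> E (p ! i) (p ! Suc i))"

text \<open>The tree T_A. Copy i (i<3) of T_0 has center Cen i, neighbours Mid i j (j<5),
  and leaves Leaf i j adjacent to Mid i j. Root is v_0, adjacent to Leaf i 0 of each copy.\<close>
datatype tv = Root | Cen nat | Mid nat nat | Leaf nat nat

definition TA_V :: "tv set" where
  "TA_V = {Root} \<union> {Cen i | i. i < 3} \<union> {Mid i j | i j. i < 3 \<and> j < 5}
          \<union> {Leaf i j | i j. i < 3 \<and> j < 5}"

definition TA_base :: "tv \<Rightarrow> tv \<Rightarrow> bool" where
  "TA_base x y \<longleftrightarrow>
     (\<exists>i j. i < 3 \<and> j < 5 \<and> x = Cen i \<and> y = Mid i j) \<or>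
     (\<exists>i j. i < 3 \<and> j < 5 \<and> x = Mid i j \<and> y = Leaf i j) \<or>
     (\<exists>i. i < 3 \<and> x = Root \<and> y = Leaf i 0)"

definition TA_E :: "tv \<Rightarrow> tv \<Rightarrow> bool" where
  "TA_E x y \<longleftrightarrow> TA_base x y \<or> TA_base y x"

end

theory Submission
  imports Defs
begin


lemma TAE_simps[simp]:
  "TA_E (Cen i) (Cen k) = False"
  "TA_E (Cen i) (Mid k j) = (i = k \<and> i < 3 \<and> j < 5)"
  "TA_E (Mid k j) (Cen i) = (i = k \<and> i < 3 \<and> j < 5)"
  "TA_E (Cen i) (Leaf k j) = False" "TA_E (Leaf k j) (Cen i) = False"
  "TA_E (Mid i j) (Mid k l) = False"
  "TA_E (Mid i j) (Leaf k l) = (i = k \<and> j = l \<and> i < 3 \<and> j < 5)"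
  "TA_E (Leaf k l) (Mid i j) = (i = k \<and> j = l \<and> i < 3 \<and> j < 5)"
  "TA_E (Leaf i j) (Leaf k l) = False"
  "TA_E Root x = (\<exists>i<3. x = Leaf i 0)" "TA_E x Root = (\<exists>i<3. x = Leaf i 0)"
  by (auto simp: TA_E_def TA_base_def)

lemma TAE_sym: "TA_E x y = TA_E y x"
  by (auto simp: TA_E_def)

definition Kc :: "nat \<Rightarrow> tv set" where
  "Kc i = {Cen i} \<union> {Mid i j | j. j < 5} \<union> {Leaf i j | j. j < 5}"

lemma Kc_mem[simp]: "Cen i \<in> Kc i" "Mid i j \<in> Kc i \<longleftrightarrow> j < 5" "Leaf i j \<in> Kc i \<longleftrightarrow> j < 5"
  "Cen k \<in> Kc i \<longleftrightarrow> k = i" "Mid k j \<in> Kc i \<longleftrightarrow> k = i \<and> j < 5" "Leaf k j \<in> Kc i \<longleftrightarrow> k = i \<and> j < 5"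
  "Root \<notin> Kc i"
  by (auto simp: Kc_def)

definition cons_on :: "nat \<Rightarrow> (tv \<Rightarrow> int) \<Rightarrow> (tv \<Rightarrow> bool) \<Rightarrow> bool" where
  "cons_on i p f \<longleftrightarrow> (\<forall>r\<in>Kc i. \<forall>s\<in>Kc i. \<forall>t\<in>Kc i. p r < p s \<and> p s < p t \<and> TA_E r t \<longrightarrow>
      (f r = f s \<longrightarrow> TA_E s t) \<and> (f s = f t \<longrightarrow> TA_E r s))"

lemma cons_on_mirror: "cons_on i p f \<Longrightarrow> cons_on i (\<lambda>x. - p x) f"
  unfolding cons_on_def by (metis TAE_sym neg_less_iff_less)

context
  fixes i :: nat and p :: "tv \<Rightarrow> int" and f :: "tv \<Rightarrow> bool"
  assumes i3: "i < 3" and inj: "inj_on p (Kc i)" and cons: "cons_on i p f"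
begin

lemma btw: "r \<in> Kc i \<Longrightarrow> s \<in> Kc i \<Longrightarrow> t \<in> Kc i \<Longrightarrow> p r < p s \<Longrightarrow> p s < p t \<Longrightarrow> TA_E r t
  \<Longrightarrow> \<not> TA_E r s \<Longrightarrow> \<not> TA_E s t \<Longrightarrow> f s \<noteq> f r \<and> f s \<noteq> f t"
  using cons unfolding cons_on_def by metis

lemma sideL: "r \<in> Kc i \<Longrightarrow> s \<in> Kc i \<Longrightarrow> t \<in> Kc i \<Longrightarrow> p r < p s \<Longrightarrow> p s < p t \<Longrightarrow> TA_E r t
  \<Longrightarrow> \<not> TA_E s t \<Longrightarrow> f r \<noteq> f s"
  using cons unfolding cons_on_def by metis

lemma sideR: "r \<in> Kc i \<Longrightarrow> s \<in> Kc i \<Longrightarrow> t \<in> Kc i \<Longrightarrow> p r < p s \<Longrightarrow> p s < p t \<Longrightarrow> TA_E r t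
  \<Longrightarrow> \<not> TA_E r s \<Longrightarrow> f s \<noteq> f t"
  using cons unfolding cons_on_def by metis

lemma pne: "x \<in> Kc i \<Longrightarrow> y \<in> Kc i \<Longrightarrow> x \<noteq> y \<Longrightarrow> p x \<noteq> p y"
  using inj by (meson inj_on_def)

lemma leaf_right:
  assumes "b < 5" "d < 5" "b \<noteq> d" "p (Mid i b) < p (Mid i d)" "p (Mid i d) < p (Cen i)"
    "f (Mid i b) \<noteq> f (Cen i)" "f (Mid i d) \<noteq> f (Cen i)"
  shows "p (Cen i) < p (Leaf i d)"
proof -
  have n1: "p (Leaf i d) \<noteq> p (Mid i b)" and n2: "p (Leaf i d) \<noteq> p (Cen i)"
    using pne assms by auto
  have "\<not> p (Leaf i d) < p (Mid i b)"
  proof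
    assume h: "p (Leaf i d) < p (Mid i b)"
    show False using btw[of "Leaf i d" "Mid i b" "Mid i d"] h assms i3 by auto
  qed
  moreover have "\<not> (p (Mid i b) < p (Leaf i d) \<and> p (Leaf i d) < p (Cen i))"
  proof
    assume h: "p (Mid i b) < p (Leaf i d) \<and> p (Leaf i d) < p (Cen i)"
    show False using btw[of "Mid i b" "Leaf i d" "Cen i"] h assms i3 by auto
  qed
  ultimately show ?thesis using n1 n2 by linarith
qed

lemma P4:
  assumes "a < 5" "b < 5" "d < 5" "e < 5" "distinct [a,b,d,e]"
    "p (Mid i a) < p (Mid i b)" "p (Mid i b) < p (Mid i d)" "p (Mid i d) < p (Mid i e)" "p (Mid i e) < p (Cen i)"
  shows False
proof -
  have fb: "f (Mid i b) \<noteq> f (Cen i)" using sideR[of "Mid i a" "Mid i b" "Cen i"] assms i3 by auto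
  have fd: "f (Mid i d) \<noteq> f (Cen i)" using sideR[of "Mid i a" "Mid i d" "Cen i"] assms i3 by auto
  have fe: "f (Mid i e) \<noteq> f (Cen i)" using sideR[of "Mid i a" "Mid i e" "Cen i"] assms i3 by auto
  have "p (Cen i) < p (Leaf i d)" using leaf_right[of b d] assms fb fd by auto
  then show False using btw[of "Mid i d" "Mid i e" "Leaf i d"] assms i3 fd fe by auto
qed

lemma P32:
  assumes "a < 5" "b < 5" "d < 5" "x < 5" "y < 5" "distinct [a,b,d,x,y]"
    "p (Mid i a) < p (Mid i b)" "p (Mid i b) < p (Mid i d)" "p (Mid i d) < p (Cen i)"
    "p (Cen i) < p (Mid i x)" "p (Mid i x) < p (Mid i y)"
  shows False
proof -
  have fb: "f (Mid i b) \<noteq> f (Cen i)" using sideR[of "Mid i a" "Mid i b" "Cen i"] assms i3 by auto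
  have fd: "f (Mid i d) \<noteq> f (Cen i)" using sideR[of "Mid i a" "Mid i d" "Cen i"] assms i3 by auto
  have fx: "f (Mid i x) \<noteq> f (Cen i)" using sideL[of "Cen i" "Mid i x" "Mid i y"] assms i3 by auto
  have L: "p (Cen i) < p (Leaf i d)" using leaf_right[of b d] assms fb fd by auto
  have "p (Leaf i d) \<noteq> p (Mid i x)" using pne assms by auto
  moreover have "\<not> p (Mid i x) < p (Leaf i d)"
  proof
    assume h: "p (Mid i x) < p (Leaf i d)"
    show False using btw[of "Mid i d" "Mid i x" "Leaf i d"] h assms i3 fd fx by auto
  qed
  moreover have "\<not> p (Leaf i d) < p (Mid i x)"
  proof
    assume h: "p (Leaf i d) < p (Mid i x)"
    show False using btw[of "Cen i" "Leaf i d" "Mid i x"] h L assms i3 fx by auto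
  qed
  ultimately show False by linarith
qed

end


lemma core:
  assumes i3: "i < 3" and inj: "inj_on p (Kc i)" and cons: "cons_on i p f"
  shows False
proof -
  have injm: "inj_on (\<lambda>x. - p x) (Kc i)" using inj by (auto simp: inj_on_def)
  have consm: "cons_on i (\<lambda>x. - p x) f" using cons_on_mirror[OF cons] .
  define S where "S = (\<lambda>j. p (Mid i j)) ` {..<5}"
  have injS: "inj_on (\<lambda>j. p (Mid i j)) {..<5}"
    using inj unfolding inj_on_def by (metis Kc_mem(2) lessThan_iff tv.inject(2))
  have cS: "card S = 5" unfolding S_def using card_image[OF injS] by simp
  have fS: "finite S" unfolding S_def by simp
  define xs where "xs = sorted_list_of_set S"
  have lxs: "length xs = 5" using cS fS xs_def by simp
  have sxs: "sorted xs" "distinct xs" "set xs = S" using fS xs_def by auto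
  obtain q0 q1 q2 q3 q4 where xs: "xs = [q0,q1,q2,q3,q4]"
    using lxs by (auto simp: length_Suc_conv numeral_eq_Suc)
  have ord: "q0 < q1" "q1 < q2" "q2 < q3" "q3 < q4" using sxs xs by auto
  have inS: "q0 \<in> S" "q1 \<in> S" "q2 \<in> S" "q3 \<in> S" "q4 \<in> S" using sxs xs by auto
  obtain j0 where j0: "j0 < 5" "q0 = p (Mid i j0)" using inS unfolding S_def by auto
  obtain j1 where j1: "j1 < 5" "q1 = p (Mid i j1)" using inS unfolding S_def by auto
  obtain j2 where j2: "j2 < 5" "q2 = p (Mid i j2)" using inS unfolding S_def by auto
  obtain j3 where j3: "j3 < 5" "q3 = p (Mid i j3)" using inS unfolding S_def by auto
  obtain j4 where j4: "j4 < 5" "q4 = p (Mid i j4)" using inS unfolding S_def by auto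
  have dj: "distinct [j0,j1,j2,j3,j4]" using ord j0 j1 j2 j3 j4 by auto
  have cne: "p (Cen i) \<notin> S" using inj unfolding S_def inj_on_def
    by (metis Kc_mem(1,2) imageE lessThan_iff tv.distinct(7))
  hence cne': "p (Cen i) \<noteq> q0" "p (Cen i) \<noteq> q1" "p (Cen i) \<noteq> q2" "p (Cen i) \<noteq> q3" "p (Cen i) \<noteq> q4"
    using inS by auto
  let ?c = "p (Cen i)"
  have "?c < q0 \<or> (q0 < ?c \<and> ?c < q1) \<or> (q1 < ?c \<and> ?c < q2) \<or> (q2 < ?c \<and> ?c < q3)
     \<or> (q3 < ?c \<and> ?c < q4) \<or> q4 < ?c" using cne' ord by arith
  then show False
  proof (elim disjE conjE)
    assume "?c < q0" thus False using P4[OF i3 injm consm, of j4 j3 j2 j1] ord j0 j1 j2 j3 j4 dj by auto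
  next
    assume "q0 < ?c" "?c < q1" thus False using P4[OF i3 injm consm, of j4 j3 j2 j1] ord j0 j1 j2 j3 j4 dj by auto
  next
    assume "q1 < ?c" "?c < q2" thus False using P32[OF i3 injm consm, of j4 j3 j2 j1 j0] ord j0 j1 j2 j3 j4 dj by auto
  next
    assume "q2 < ?c" "?c < q3" thus False using P32[OF i3 inj cons, of j0 j1 j2 j3 j4] ord j0 j1 j2 j3 j4 dj by auto
  next
    assume "q3 < ?c" "?c < q4" thus False using P4[OF i3 inj cons, of j0 j1 j2 j3] ord j0 j1 j2 j3 j4 dj by auto
  next
    assume "q4 < ?c" thus False using P4[OF i3 inj cons, of j1 j2 j3 j4] ord j0 j1 j2 j3 j4 dj by auto
  qed
qed



definition pos :: "'a set \<Rightarrow> 'a rel \<Rightarrow> 'a \<Rightarrow> int" where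
  "pos W r x = int (card {z\<in>W. (z, x) \<in> r})"

lemma pos_less:
  assumes "finite W" "strict_linear_order_on W r" "x \<in> W" "y \<in> W" "(x, y) \<in> r"
  shows "pos W r x < pos W r y"
proof -
  have tr: "trans r" and ir: "irrefl r" using assms(2) by (auto simp: strict_linear_order_on_def)
  have "{z\<in>W. (z, x) \<in> r} \<subset> {z\<in>W. (z, y) \<in> r}"
  proof
    show "{z\<in>W. (z, x) \<in> r} \<subseteq> {z\<in>W. (z, y) \<in> r}" using tr assms(5) by (auto dest: transD)
    show "{z\<in>W. (z, x) \<in> r} \<noteq> {z\<in>W. (z, y) \<in> r}" using ir assms(3,5) by (auto simp: irrefl_def)
  qed
  hence "card {z\<in>W. (z, x) \<in> r} < card {z\<in>W. (z, y) \<in> r}"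
    using assms(1) by (intro psubset_card_mono) auto
  thus ?thesis unfolding pos_def by simp
qed

lemma pos_iff:
  assumes "finite W" "strict_linear_order_on W r" "x \<in> W" "y \<in> W"
  shows "(x, y) \<in> r \<longleftrightarrow> pos W r x < pos W r y"
proof
  assume "(x, y) \<in> r" thus "pos W r x < pos W r y" by (rule pos_less[OF assms])
next
  assume h: "pos W r x < pos W r y"
  show "(x, y) \<in> r"
  proof (rule ccontr)
    assume n: "(x, y) \<notin> r"
    have "x \<noteq> y" using h by auto
    moreover have "total_on W r" using assms(2) unfolding strict_linear_order_on_def by blast
    ultimately have "(y, x) \<in> r" using n assms(3,4) unfolding total_on_def by blast
    hence "pos W r y < pos W r x" by (rule pos_less[OF assms(1,2,4,3)])
    thus False using h by linarith
  qed
qed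

lemma pos_inj:
  assumes "finite W" "strict_linear_order_on W r"
  shows "inj_on (pos W r) W"
proof (rule inj_onI)
  fix x y assume xy: "x \<in> W" "y \<in> W" "pos W r x = pos W r y"
  show "x = y"
  proof (rule ccontr)
    assume "x \<noteq> y"
    moreover have "total_on W r" using assms(2) unfolding strict_linear_order_on_def by blast
    ultimately have "(x, y) \<in> r \<or> (y, x) \<in> r" using xy unfolding total_on_def by blast
    thus False using pos_less[OF assms(1,2) xy(1,2)] pos_less[OF assms(1,2) xy(2,1)] xy(3) by auto
  qed
qed

lemma finite_TA_V: "finite TA_V"
  unfolding TA_V_def
  by (intro finite_UnI finite_image_set2 finite_image_set) auto

lemma Kc_sub: "i < 3 \<Longrightarrow> Kc i \<subseteq> TA_V"
  unfolding Kc_def TA_V_def by auto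

lemma card_le2_sub:
  assumes "finite Q" "card Q \<le> 2"
  shows "\<exists>A B. Q \<subseteq> {A, B}"
proof -
  have "card Q = 0 \<or> card Q = 1 \<or> card Q = 2" using assms(2) by linarith
  moreover have ?thesis if "card Q = 0"
  proof -
    have "Q = {}" using that assms(1) by simp
    thus ?thesis by blast
  qed
  moreover have ?thesis if "card Q = 1"
  proof -
    from that obtain x where "Q = {x}" by (rule card_1_singletonE)
    thus ?thesis by blast
  qed
  moreover have ?thesis if "card Q = 2"
  proof -
    from that obtain x y where "Q = {x, y}" unfolding card_2_iff by blast
    thus ?thesis by blast
  qed
  ultimately show ?thesis by blast
qed

lemma LB:
  assumes fin: "finite W" and i3: "i < 3" and KW: "Kc i \<subseteq> W"
    and slo: "strict_linear_order_on W ord" and part: "partition_on W P"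
    and sc: "strongly_consistent W TA_E ord P"
  shows "3 \<le> card {X\<in>P. X \<inter> Kc i \<noteq> {}}"
proof (rule ccontr)
  let ?Q = "{X\<in>P. X \<inter> Kc i \<noteq> {}}"
  assume "\<not> 3 \<le> card ?Q"
  moreover have fP: "finite P" using finite_elements[OF fin part] .
  ultimately obtain A B where AB: "?Q \<subseteq> {A, B}" using card_le2_sub[of ?Q] by auto
  define f where "f x = (\<exists>X\<in>P. x \<in> X \<and> X = A)" for x
  define p where "p = pos W ord"
  have WU: "W = \<Union>P" by (rule partition_onD1[OF part])
  have cover: "\<exists>X\<in>P. x \<in> X" if "x \<in> Kc i" for x
  proof -
    have "x \<in> \<Union>P" using that KW WU by blast
    thus ?thesis by (rule UnionE) blast
  qed
  have sc': "(same_class P r s \<longrightarrow> TA_E s t) \<and> (same_class P s t \<longrightarrow> TA_E r s)"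
    if "r \<in> W" "s \<in> W" "t \<in> W" "(r, s) \<in> ord" "(s, t) \<in> ord" "TA_E r t" for r s t
    using sc that unfolding strongly_consistent_def by blast
  have same: "same_class P r s" if rs: "r \<in> Kc i" "s \<in> Kc i" "f r = f s" for r s
  proof -
    obtain X where X: "X \<in> P" "r \<in> X" using cover rs(1) by blast
    obtain Y where Y: "Y \<in> P" "s \<in> Y" using cover rs(2) by blast
    have "X \<in> ?Q" "Y \<in> ?Q" using X Y rs by auto
    hence XA: "X = A \<or> X = B" "Y = A \<or> Y = B" using AB by auto
    have uX: "\<And>Z. Z \<in> P \<Longrightarrow> r \<in> Z \<Longrightarrow> Z = X" using part X unfolding partition_on_def
      by (meson disjointD disjoint_iff)
    have uY: "\<And>Z. Z \<in> P \<Longrightarrow> s \<in> Z \<Longrightarrow> Z = Y" using part Y unfolding partition_on_def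
      by (meson disjointD disjoint_iff)
    have fr: "f r \<longleftrightarrow> X = A" unfolding f_def using X uX by blast
    have fs: "f s \<longleftrightarrow> Y = A" unfolding f_def using Y uY by blast
    have "X = Y" using fr fs rs(3) XA by blast
    thus ?thesis using X Y unfolding same_class_def by blast
  qed
  have inj: "inj_on p (Kc i)" unfolding p_def using pos_inj[OF fin slo] KW inj_on_subset by blast
  have cons: "cons_on i p f" unfolding cons_on_def
  proof (intro ballI impI)
    fix r s t assume rst: "r \<in> Kc i" "s \<in> Kc i" "t \<in> Kc i" and h: "p r < p s \<and> p s < p t \<and> TA_E r t"
    have W: "r \<in> W" "s \<in> W" "t \<in> W" using rst KW by auto
    have o1: "(r, s) \<in> ord" using h pos_iff[OF fin slo W(1) W(2)] unfolding p_def by simp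
    have o2: "(s, t) \<in> ord" using h pos_iff[OF fin slo W(2) W(3)] unfolding p_def by simp
    have "(same_class P r s \<longrightarrow> TA_E s t) \<and> (same_class P s t \<longrightarrow> TA_E r s)"
      using sc'[OF W o1 o2] h by blast
    thus "(f r = f s \<longrightarrow> TA_E s t) \<and> (f s = f t \<longrightarrow> TA_E r s)" using same rst by blast
  qed
  show False using core[OF i3 inj cons] .
qed


lemma edge_out: "x \<in> Kc i \<Longrightarrow> y \<notin> Kc i \<Longrightarrow> TA_E x y \<Longrightarrow> x = Leaf i 0 \<and> y = Root"
  by (cases x; cases y) auto

lemma walk_out:
  assumes "(\<lambda>a b. a \<in> X \<and> b \<in> X \<and> TA_E a b)\<^sup>*\<^sup>* x y" "x \<in> Kc i" "y \<notin> Kc i"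
  shows "Leaf i 0 \<in> X \<and> Root \<in> X"
proof -
  have "y \<in> Kc i \<or> (Leaf i 0 \<in> X \<and> Root \<in> X)" using assms(1)
  proof (induction rule: rtranclp_induct)
    case base thus ?case using assms(2) by simp
  next
    case (step b c) thus ?case using edge_out[of b i c] by auto
  qed
  thus ?thesis using assms(3) by blast
qed

lemma Kc_disj: "x \<in> Kc i \<Longrightarrow> i \<noteq> k \<Longrightarrow> x \<notin> Kc k"
  by (cases x) auto

lemma TA_V_mem: "Root \<in> TA_V" "i < 3 \<Longrightarrow> Leaf i 0 \<in> TA_V"
  unfolding TA_V_def by auto

lemma claw_arith:
  fixes q :: "nat \<Rightarrow> int"
  assumes d: "\<And>k. k < 3 \<Longrightarrow> q k \<noteq> r" "q 0 \<noteq> q 1" "q 0 \<noteq> q 2" "q 1 \<noteq> q 2"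
  shows "\<exists>k l. k < 3 \<and> l < 3 \<and> k \<noteq> l \<and> ((q k < q l \<and> q l < r) \<or> (r < q l \<and> q l < q k))"
proof -
  have "\<exists>k l. k < 3 \<and> l < 3 \<and> k \<noteq> l \<and> (q k < r \<longleftrightarrow> q l < r)"
  proof (cases "q 0 < r \<longleftrightarrow> q 1 < r")
    case True thus ?thesis by (intro exI[of _ 0] exI[of _ 1]) auto
  next
    case False
    show ?thesis
    proof (cases "q 0 < r \<longleftrightarrow> q 2 < r")
      case True thus ?thesis by (intro exI[of _ 0] exI[of _ 2]) auto
    next
      case False2: False
      have "q 1 < r \<longleftrightarrow> q 2 < r" using False False2 by blast
      thus ?thesis by (intro exI[of _ 1] exI[of _ 2]) auto
    qed
  qed
  then obtain k l where kl: "k < 3" "l < 3" "k \<noteq> l" "q k < r \<longleftrightarrow> q l < r" by blast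
  have dkl: "q k \<noteq> q l"
  proof -
    have "k = 0 \<or> k = 1 \<or> k = 2" "l = 0 \<or> l = 1 \<or> l = 2" using kl by linarith+
    thus ?thesis using kl(3) d(2-4) by auto
  qed
  have rk: "q k \<noteq> r" "q l \<noteq> r" using d(1) kl by auto
  show ?thesis
  proof (cases "q k < q l")
    case True
    show ?thesis
    proof (cases "q l < r")
      case True2: True thus ?thesis using True kl by blast
    next
      case False
      hence "r < q k" using kl(4) rk by linarith
      hence "r < q k \<and> q k < q l" using True by simp
      thus ?thesis using kl by blast
    qed
  next
    case False
    hence lk: "q l < q k" using dkl by linarith
    show ?thesis
    proof (cases "q k < r")
      case True thus ?thesis using lk kl by blast
    next
      case False2: False
      hence "r < q l" using kl(4) rk by linarith
      thus ?thesis using lk kl by blast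
    qed
  qed
qed

lemma part1:
  assumes part: "partition_on TA_V P" and c3: "card P = 3" and slo: "strict_linear_order_on TA_V \<sigma>"
    and sc: "strongly_consistent TA_V TA_E \<sigma> P" and XP: "X \<in> P"
  shows "\<not> connected_induced TA_E X"
proof
  assume conn: "connected_induced TA_E X"
  have fP: "finite P" using finite_elements[OF finite_TA_V part] .
  have meet: "X \<inter> Kc i \<noteq> {}" if i3: "i < 3" for i
  proof -
    let ?Q = "{X\<in>P. X \<inter> Kc i \<noteq> {}}"
    have "3 \<le> card ?Q" using LB[OF finite_TA_V i3 Kc_sub[OF i3] slo part sc] .
    moreover have "?Q \<subseteq> P" by blast
    ultimately have "?Q = P" using fP c3 by (metis card_seteq)
    thus ?thesis using XP by blast
  qed
  obtain x0 where x0: "x0 \<in> X" "x0 \<in> Kc 0" using meet[of 0] by auto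
  obtain x1 where x1: "x1 \<in> X" "x1 \<in> Kc 1" using meet[of 1] by auto
  obtain x2 where x2: "x2 \<in> X" "x2 \<in> Kc 2" using meet[of 2] by auto
  have conn': "(\<lambda>a b. a \<in> X \<and> b \<in> X \<and> TA_E a b)\<^sup>*\<^sup>* x y" if "x \<in> X" "y \<in> X" for x y
    using conn that unfolding connected_induced_def by blast
  have L0: "Leaf 0 0 \<in> X" "Root \<in> X" using walk_out[OF conn'[OF x0(1) x1(1)] x0(2) Kc_disj[OF x1(2)]] by auto
  have L1: "Leaf 1 0 \<in> X" using walk_out[OF conn'[OF x1(1) x0(1)] x1(2) Kc_disj[OF x0(2)]] by auto
  have L2: "Leaf 2 0 \<in> X" using walk_out[OF conn'[OF x2(1) x0(1)] x2(2) Kc_disj[OF x0(2)]] by auto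
  have LX: "Leaf k 0 \<in> X" if "k < 3" for k
  proof -
    have "k = 0 \<or> k = 1 \<or> k = 2" using that by linarith
    thus ?thesis using L0 L1 L2 by blast
  qed
  define p where "p = pos TA_V \<sigma>"
  have sc': "(same_class P r s \<longrightarrow> TA_E s t) \<and> (same_class P s t \<longrightarrow> TA_E r s)"
    if "r \<in> TA_V" "s \<in> TA_V" "t \<in> TA_V" "(r, s) \<in> \<sigma>" "(s, t) \<in> \<sigma>" "TA_E r t" for r s t
    using sc that unfolding strongly_consistent_def by blast
  have piff: "(x, y) \<in> \<sigma> \<longleftrightarrow> p x < p y" if "x \<in> TA_V" "y \<in> TA_V" for x y
    unfolding p_def by (rule pos_iff[OF finite_TA_V slo that])
  have no: "\<not> (p (Leaf k 0) < p (Leaf l 0) \<and> p (Leaf l 0) < p Root) \<and>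
            \<not> (p Root < p (Leaf l 0) \<and> p (Leaf l 0) < p (Leaf k 0))"
    if kl: "k < 3" "l < 3" "k \<noteq> l" for k l
  proof
    have V: "Leaf k 0 \<in> TA_V" "Leaf l 0 \<in> TA_V" "Root \<in> TA_V" using TA_V_mem kl by auto
    have sc1: "same_class P (Leaf l 0) Root" "same_class P Root (Leaf l 0)"
      using XP LX[OF kl(2)] L0 unfolding same_class_def by blast+
    show "\<not> (p (Leaf k 0) < p (Leaf l 0) \<and> p (Leaf l 0) < p Root)"
    proof
      assume h: "p (Leaf k 0) < p (Leaf l 0) \<and> p (Leaf l 0) < p Root"
      have "(Leaf k 0, Leaf l 0) \<in> \<sigma>" "(Leaf l 0, Root) \<in> \<sigma>" using h piff V by auto
      from sc'[OF V(1,2,3) this] show False using sc1 kl by auto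
    qed
    show "\<not> (p Root < p (Leaf l 0) \<and> p (Leaf l 0) < p (Leaf k 0))"
    proof
      assume h: "p Root < p (Leaf l 0) \<and> p (Leaf l 0) < p (Leaf k 0)"
      have "(Root, Leaf l 0) \<in> \<sigma>" "(Leaf l 0, Leaf k 0) \<in> \<sigma>" using h piff V by auto
      from sc'[OF V(3,2,1) this] show False using sc1 kl by auto
    qed
  qed
  have inj: "inj_on p TA_V" unfolding p_def by (rule pos_inj[OF finite_TA_V slo])
  have d: "p (Leaf 0 0) \<noteq> p Root" "p (Leaf 1 0) \<noteq> p Root" "p (Leaf 2 0) \<noteq> p Root"
    "p (Leaf 0 0) \<noteq> p (Leaf 1 0)" "p (Leaf 0 0) \<noteq> p (Leaf 2 0)" "p (Leaf 1 0) \<noteq> p (Leaf 2 0)"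
    by (simp_all add: inj_on_eq_iff[OF inj] TA_V_mem)
  define q where "q k = p (Leaf k 0)" for k
  have "\<exists>k l. k < 3 \<and> l < 3 \<and> k \<noteq> l \<and> ((q k < q l \<and> q l < p Root) \<or> (p Root < q l \<and> q l < q k))"
  proof (rule claw_arith)
    fix k :: nat assume "k < 3"
    thus "q k \<noteq> p Root" unfolding q_def by (simp add: inj_on_eq_iff[OF inj] TA_V_mem)
  qed (use d in \<open>simp_all add: q_def\<close>)
  then obtain k l where "k < 3" "l < 3" "k \<noteq> l" "(q k < q l \<and> q l < p Root) \<or> (p Root < q l \<and> q l < q k)"
    by blast
  thus False using no[of k l] unfolding q_def by blast
qed

fun cp :: "tv \<Rightarrow> nat" where
  "cp Root = 3" | "cp (Cen i) = i" | "cp (Mid i j) = i" | "cp (Leaf i j) = i"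

lemma edge_cp: "TA_E x y \<Longrightarrow> x \<noteq> Root \<Longrightarrow> y \<noteq> Root \<Longrightarrow> cp x = cp y"
  by (cases x; cases y) auto

lemma cp_Kc: "x \<in> Kc i \<Longrightarrow> cp x = i \<and> x \<noteq> Root"
  by (cases x) auto

lemma seg:
  assumes adj: "\<forall>m. Suc m < length C \<longrightarrow> TA_E (C ! m) (C ! Suc m)" and kl: "k \<le> l"
  shows "l < length C \<longrightarrow> (\<forall>m. k \<le> m \<and> m \<le> l \<longrightarrow> C ! m \<noteq> Root) \<longrightarrow> cp (C ! k) = cp (C ! l)"
  using kl
proof (induction l rule: dec_induct)
  case base show ?case by simp
next
  case (step n)
  show ?case
  proof (intro impI)
    assume l: "Suc n < length C" and nr: "\<forall>m. k \<le> m \<and> m \<le> Suc n \<longrightarrow> C ! m \<noteq> Root"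
    have "cp (C ! k) = cp (C ! n)" using step l nr by auto
    moreover have "cp (C ! n) = cp (C ! Suc n)"
      using edge_cp adj l nr step(1) by auto
    ultimately show "cp (C ! k) = cp (C ! Suc n)" by simp
  qed
qed

lemma avoid:
  assumes sp: "simple_path TA_V TA_E C"
  shows "\<exists>i<3. Kc i \<inter> set C = {}"
proof -
  define n where "n = length C"
  have ne: "C \<noteq> []" and dist: "distinct C" and adj: "\<forall>m. Suc m < length C \<longrightarrow> TA_E (C ! m) (C ! Suc m)"
    using sp unfolding simple_path_def by auto
  have n0: "0 < n" using ne n_def by simp
  have key: "cp (C ! m) = cp (C ! 0) \<or> cp (C ! m) = cp (C ! (n - 1))" if m: "m < n" "C ! m \<noteq> Root" for m
  proof (cases "\<forall>m'. m' \<le> m \<longrightarrow> C ! m' \<noteq> Root")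
    case True
    thus ?thesis using seg[OF adj, of 0 m] m n_def by auto
  next
    case False
    then obtain r where r: "r \<le> m" "C ! r = Root" by auto
    have rm: "r < m" using r m by (cases "r = m") auto
    have "C ! m' \<noteq> Root" if "m \<le> m'" "m' \<le> n - 1" for m'
    proof
      assume "C ! m' = Root"
      hence "C ! m' = C ! r" using r by simp
      moreover have "m' < length C" "r < length C" using that m rm n_def n0 by auto
      ultimately have "m' = r" using dist nth_eq_iff_index_eq by blast
      thus False using rm that by simp
    qed
    hence "cp (C ! m) = cp (C ! (n - 1))" using seg[OF adj, of m "n - 1"] m n_def n0 by auto
    thus ?thesis by simp
  qed
  define a where "a = cp (C ! 0)"
  define b where "b = cp (C ! (n - 1))"
  define i where "i = (if a \<noteq> 0 \<and> b \<noteq> 0 then 0 else if a \<noteq> 1 \<and> b \<noteq> 1 then 1 else (2::nat))"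
  have i: "i < 3" "i \<noteq> a" "i \<noteq> b" unfolding i_def by auto
  have "Kc i \<inter> set C = {}"
  proof (rule ccontr)
    assume "Kc i \<inter> set C \<noteq> {}"
    then obtain x where x: "x \<in> Kc i" "x \<in> set C" by blast
    then obtain m where m: "m < n" "C ! m = x" using n_def by (auto simp: in_set_conv_nth)
    have "cp x = i" "x \<noteq> Root" using cp_Kc[OF x(1)] by auto
    thus False using key[of m] m i a_def b_def by auto
  qed
  thus ?thesis using i by blast
qed

lemma part2:
  assumes part: "partition_on TA_V P" and c3: "card P = 3" and slo: "strict_linear_order_on TA_V \<sigma>"
    and sc: "strongly_consistent TA_V TA_E \<sigma> P" and sp: "simple_path TA_V TA_E C"
  shows "pthin (TA_V - set C) TA_E = 3"
proof -
  define W where "W = TA_V - set C"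
  have fW: "finite W" unfolding W_def using finite_TA_V by simp
  obtain i where i: "i < 3" "Kc i \<inter> set C = {}" using avoid[OF sp] by blast
  have KW: "Kc i \<subseteq> W" unfolding W_def using Kc_sub[OF i(1)] i(2) by blast
  define ord where "ord = \<sigma> \<inter> (W \<times> W)"
  define P' where "P' = (\<inter>) W ` P - {{}}"
  have WT: "W \<inter> TA_V = W" unfolding W_def by blast
  have part': "partition_on W P'" unfolding P'_def using partition_on_restrict[OF part, of W] WT by simp
  have tr: "trans \<sigma>" and ir: "irrefl \<sigma>" and to: "total_on TA_V \<sigma>"
    using slo unfolding strict_linear_order_on_def by auto
  have "trans ord" unfolding ord_def trans_def using tr unfolding trans_def by blast
  moreover have "irrefl ord" unfolding ord_def irrefl_def using ir unfolding irrefl_def by blast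
  moreover have "total_on W ord" unfolding ord_def total_on_def using to unfolding total_on_def W_def by blast
  ultimately have slo': "strict_linear_order_on W ord" unfolding strict_linear_order_on_def by blast
  have scP: "same_class P r s" if "same_class P' r s" for r s
    using that unfolding same_class_def P'_def by blast
  have sc': "strongly_consistent W TA_E ord P'"
    unfolding strongly_consistent_def
  proof (intro ballI impI)
    fix r s t assume V: "r \<in> W" "s \<in> W" "t \<in> W" and h: "(r, s) \<in> ord \<and> (s, t) \<in> ord \<and> TA_E r t"
    have V': "r \<in> TA_V" "s \<in> TA_V" "t \<in> TA_V" using V W_def by auto
    have "(r, s) \<in> \<sigma>" "(s, t) \<in> \<sigma>" using h ord_def by auto
    hence "(same_class P r s \<longrightarrow> TA_E s t) \<and> (same_class P s t \<longrightarrow> TA_E r s)"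
      using sc V' h unfolding strongly_consistent_def by blast
    thus "(same_class P' r s \<longrightarrow> TA_E s t) \<and> (same_class P' s t \<longrightarrow> TA_E r s)" using scP by blast
  qed
  have fP: "finite P" using finite_elements[OF finite_TA_V part] .
  have "card P' \<le> card ((\<inter>) W ` P)" unfolding P'_def using fP by (intro card_mono) auto
  also have "\<dots> \<le> card P" using card_image_le fP by blast
  finally have le3: "card P' \<le> 3" using c3 by simp
  have lb: "3 \<le> card Q" if "strict_linear_order_on W o'" "partition_on W Q" "strongly_consistent W TA_E o' Q" for o' Q
  proof -
    have "3 \<le> card {X\<in>Q. X \<inter> Kc i \<noteq> {}}" using LB[OF fW i(1) KW that] .
    also have "\<dots> \<le> card Q" using finite_elements[OF fW that(2)] by (intro card_mono) auto
    finally show ?thesis .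
  qed
  have cP': "card P' = 3" using lb[OF slo' part' sc'] le3 by linarith
  show ?thesis unfolding W_def[symmetric] pthin_def
  proof (rule Least_equality)
    show "\<exists>ord P. strict_linear_order_on W ord \<and> partition_on W P \<and> card P = 3 \<and> strongly_consistent W TA_E ord P"
      using slo' part' cP' sc' by blast
  next
    fix m assume "\<exists>ord P. strict_linear_order_on W ord \<and> partition_on W P \<and> card P = m \<and> strongly_consistent W TA_E ord P"
    thus "3 \<le> m" using lb by blast
  qed
qed

theorem proposition7:
  fixes V0 V1 V2 :: "tv set" and \<sigma> :: "tv rel"
  assumes "partition_on TA_V {V0, V1, V2}"
    and "card {V0, V1, V2} = 3"
    and "strict_linear_order_on TA_V \<sigma>"
    and "strongly_consistent TA_V TA_E \<sigma> {V0, V1, V2}"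
  shows "\<not> connected_induced TA_E V0 \<and> \<not> connected_induced TA_E V1 \<and> \<not> connected_induced TA_E V2
    \<and> (\<forall>C0. simple_path TA_V TA_E C0 \<longrightarrow> pthin (TA_V - set C0) TA_E = 3)"
  using part1[OF assms, of V0] part1[OF assms, of V1] part1[OF assms, of V2] part2[OF assms]
  by blast

end
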